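(* For every countable linear order $Y$, $\mathsf{rk}(Y)=\mathsf{rk}(Y^* )$, where $Y^*$ denotes $Y$ with the reversed ordering.
   Context: Let $\mathcal F$ be the class of finite linear orders (language $\{<\}$); countable linear orders are the structures considered; substructures are suborders and $\mathsf{age}(X)$ is the set of finite suborders of $X$. For $A\le B$, $B$ is a prime extension of $A$ if $|B\setminus A|=1$; a realization of $B$ in $X$ (where $A\le X$) is $C\le X$ with $A\le C$ and an order-isomorphism $B\to C$ fixing $A$ pointwise. For $F\in\mathsf{age}(X)$ define by recursion: $\mathsf{rk}_X(F)\ge0$ always; $\mathsf{rk}_X(F)\ge\alpha+1$ iff every prime extension $B\in\mathcal F$ of $F$ has a realization $C$ in $X$ with $\mathsf{rk}_X(C)\ge\alpha$; for limit $\alpha$, $\mathsf{rk}_X(F)\ge\alpha$ iff $\mathsf{rk}_X(F)\ge\beta$ for all $\beta<\alpha$. $\mathsf{rk}_X(F)=\sup\{\alpha:\mathsf{rk}_X(F)\ge\alpha\}$ (or $\infty$), and $\mathsf{rk}(X)=\mathsf{rk}_X(\emptyset)$. *)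

theory Defs
  imports Main "HOL-Library.Countable_Set"
begin

definition strict_linorder_on :: "'a set \<Rightarrow> ('a \<Rightarrow> 'a \<Rightarrow> bool) \<Rightarrow> bool" where
  "strict_linorder_on X lt \<longleftrightarrow>
     (\<forall>x\<in>X. \<not> lt x x) \<and>
     (\<forall>x\<in>X. \<forall>y\<in>X. \<forall>z\<in>X. lt x y \<longrightarrow> lt y z \<longrightarrow> lt x z) \<and>
     (\<forall>x\<in>X. \<forall>y\<in>X. x \<noteq> y \<longrightarrow> lt x y \<or> lt y x)"

definition rev_order :: "('a \<Rightarrow> 'a \<Rightarrow> bool) \<Rightarrow> 'a \<Rightarrow> 'a \<Rightarrow> bool" where
  "rev_order lt = (\<lambda>x y. lt y x)"

text \<open>A prime extension B of the finite suborder (F, lt) of X: up to isomorphism over F,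
  B has carrier insert None (Some ` F) (F embedded via Some, None the new point),
  carries a strict linear order R, and (F,lt) is a suborder of B via Some.\<close>
definition prime_ext :: "('a \<Rightarrow> 'a \<Rightarrow> bool) \<Rightarrow> 'a set \<Rightarrow> ('a option \<Rightarrow> 'a option \<Rightarrow> bool) \<Rightarrow> bool" where
  "prime_ext lt F R \<longleftrightarrow>
     strict_linorder_on (insert None (Some ` F)) R \<and>
     (\<forall>x\<in>F. \<forall>y\<in>F. R (Some x) (Some y) \<longleftrightarrow> lt x y)"

text \<open>C = insert c F is a realization of the prime extension R in X: the map fixing F
  pointwise and sending the new point None to c is an order isomorphism onto C \<le> X.\<close>
definition realizes :: "'a set \<Rightarrow> ('a \<Rightarrow> 'a \<Rightarrow> bool) \<Rightarrow> 'a set \<Rightarrow> ('a option \<Rightarrow> 'a option \<Rightarrow> bool) \<Rightarrow> 'a \<Rightarrow> bool" where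
  "realizes X lt F R c \<longleftrightarrow> c \<in> X \<and> c \<notin> F \<and>
     (\<forall>x\<in>F. (R None (Some x) \<longleftrightarrow> lt c x) \<and> (R (Some x) None \<longleftrightarrow> lt x c))"

text \<open>rk_ge X lt \<alpha> F means rk_X(F) \<ge> \<alpha>, for \<alpha> an ordinal represented as an element of a
  well-ordered type. Defined by well-founded recursion on \<alpha>:
  successor \<alpha> = \<beta>+1: every prime extension has a realization C with rk_X(C) \<ge> \<beta>;
  otherwise (\<alpha> = 0 or limit): rk_X(F) \<ge> \<beta> for all \<beta> < \<alpha> (vacuously true for \<alpha> = 0).\<close>
definition rk_ge :: "'a set \<Rightarrow> ('a \<Rightarrow> 'a \<Rightarrow> bool) \<Rightarrow> 'o::wellorder \<Rightarrow> 'a set \<Rightarrow> bool" where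
  "rk_ge X lt = wfrec {(\<beta>, \<alpha>). \<beta> < \<alpha>}
     (\<lambda>rec \<alpha> F.
        if (\<exists>\<beta><\<alpha>. \<forall>\<gamma>. \<not> (\<beta> < \<gamma> \<and> \<gamma> < \<alpha>))
        then (let \<beta> = (THE \<beta>. \<beta> < \<alpha> \<and> (\<forall>\<gamma>. \<not> (\<beta> < \<gamma> \<and> \<gamma> < \<alpha>))) in
              \<forall>R. prime_ext lt F R \<longrightarrow> (\<exists>c. realizes X lt F R c \<and> rec \<beta> (insert c F)))
        else (\<forall>\<beta><\<alpha>. rec \<beta> F))"

definition rank_ge :: "'a set \<Rightarrow> ('a \<Rightarrow> 'a \<Rightarrow> bool) \<Rightarrow> 'o::wellorder \<Rightarrow> bool" where
  "rank_ge X lt \<alpha> = rk_ge X lt \<alpha> {}"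

end

theory Submission
  imports Defs
begin

lemma wf_less_rel: "wf {(\<beta>, \<alpha>). (\<beta>::'o::wellorder) < \<alpha>}"
  using wf by (simp add: wf_def)

lemma rev_rev: "rev_order (rev_order R) = R"
  by (simp add: rev_order_def)

lemma slo_rev: "strict_linorder_on X (rev_order R) \<longleftrightarrow> strict_linorder_on X R"
  unfolding strict_linorder_on_def rev_order_def by blast

lemma pe_rev: "prime_ext (rev_order lt) F R \<longleftrightarrow> prime_ext lt F (rev_order R)"
  unfolding prime_ext_def using slo_rev[of _ R] by (auto simp add: rev_order_def)

lemma real_rev: "realizes X (rev_order lt) F R c \<longleftrightarrow> realizes X lt F (rev_order R) c"
  unfolding realizes_def rev_order_def by blast

lemma ext_rev:
  "(\<forall>R. prime_ext (rev_order lt) F R \<longrightarrow> (\<exists>c. realizes X (rev_order lt) F R c \<and> Q c))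
   \<longleftrightarrow> (\<forall>R. prime_ext lt F R \<longrightarrow> (\<exists>c. realizes X lt F R c \<and> Q c))"
  by (metis pe_rev real_rev rev_rev)

lemma rk_ge_unfold:
  "rk_ge X lt \<alpha> F =
     (if (\<exists>\<beta><\<alpha>. \<forall>\<gamma>. \<not> (\<beta> < \<gamma> \<and> \<gamma> < \<alpha>))
        then (let \<beta> = (THE \<beta>. \<beta> < \<alpha> \<and> (\<forall>\<gamma>. \<not> (\<beta> < \<gamma> \<and> \<gamma> < \<alpha>))) in
              \<forall>R. prime_ext lt F R \<longrightarrow> (\<exists>c. realizes X lt F R c \<and> rk_ge X lt \<beta> (insert c F)))
        else (\<forall>\<beta><\<alpha>. rk_ge X lt \<beta> F))"
proof -
  have e: "rk_ge X lt \<alpha> = (\<lambda>rec \<alpha> F.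
        if (\<exists>\<beta><\<alpha>. \<forall>\<gamma>. \<not> (\<beta> < \<gamma> \<and> \<gamma> < \<alpha>))
        then (let \<beta> = (THE \<beta>. \<beta> < \<alpha> \<and> (\<forall>\<gamma>. \<not> (\<beta> < \<gamma> \<and> \<gamma> < \<alpha>))) in
              \<forall>R. prime_ext lt F R \<longrightarrow> (\<exists>c. realizes X lt F R c \<and> rec \<beta> (insert c F)))
        else (\<forall>\<beta><\<alpha>. rec \<beta> F)) (cut (rk_ge X lt) {(\<beta>, \<alpha>). \<beta> < \<alpha>} \<alpha>) \<alpha>"
    unfolding rk_ge_def by (rule wfrec[OF wf_less_rel])
  show ?thesis
  proof (cases "\<exists>\<beta><\<alpha>. \<forall>\<gamma>. \<not> (\<beta> < \<gamma> \<and> \<gamma> < \<alpha>)")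
    case True
    then obtain b where b: "b < \<alpha>" "\<forall>\<gamma>. \<not> (b < \<gamma> \<and> \<gamma> < \<alpha>)" by blast
    have th: "(THE \<beta>. \<beta> < \<alpha> \<and> (\<forall>\<gamma>. \<not> (\<beta> < \<gamma> \<and> \<gamma> < \<alpha>))) = b"
    proof (rule the_equality)
      show "b < \<alpha> \<and> (\<forall>\<gamma>. \<not> (b < \<gamma> \<and> \<gamma> < \<alpha>))" using b by blast
    next
      fix x assume "x < \<alpha> \<and> (\<forall>\<gamma>. \<not> (x < \<gamma> \<and> \<gamma> < \<alpha>))"
      with b show "x = b" by (metis linorder_neqE)
    qed
    show ?thesis using True b by (subst e) (unfold th Let_def, simp add: cut_apply)
  next
    case False
    show ?thesis by (subst e) (unfold if_not_P[OF False], simp add: cut_apply)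
  qed
qed

lemma rk_ge_rev: "rk_ge X lt (\<alpha>::'o::wellorder) F \<longleftrightarrow> rk_ge X (rev_order lt) \<alpha> F"
proof (induction \<alpha> arbitrary: F rule: less_induct)
  case (less \<alpha>)
  show ?case
  proof (cases "\<exists>\<beta><\<alpha>. \<forall>\<gamma>. \<not> (\<beta> < \<gamma> \<and> \<gamma> < \<alpha>)")
    case True
    then obtain b where b: "b < \<alpha>" "\<forall>\<gamma>. \<not> (b < \<gamma> \<and> \<gamma> < \<alpha>)" by blast
    have th: "(THE \<beta>. \<beta> < \<alpha> \<and> (\<forall>\<gamma>. \<not> (\<beta> < \<gamma> \<and> \<gamma> < \<alpha>))) = b"
    proof (rule the_equality)
      show "b < \<alpha> \<and> (\<forall>\<gamma>. \<not> (b < \<gamma> \<and> \<gamma> < \<alpha>))" using b by blast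
    next
      fix x assume "x < \<alpha> \<and> (\<forall>\<gamma>. \<not> (x < \<gamma> \<and> \<gamma> < \<alpha>))"
      with b show "x = b" by (metis linorder_neqE)
    qed
    have IH: "\<And>G. rk_ge X lt b G = rk_ge X (rev_order lt) b G" using less b by blast
    show ?thesis
      apply (subst (1 2) rk_ge_unfold)
      apply (unfold th Let_def)
      using True ext_rev[of lt F X "\<lambda>c. rk_ge X lt b (insert c F)"]
      by (simp add: th Let_def IH)
  next
    case False
    show ?thesis
      apply (subst (1 2) rk_ge_unfold)
      apply (unfold if_not_P[OF False])
      using less by simp
  qed
qed

theorem proposition6p8:
  fixes Y :: "'a set" and lt :: "'a \<Rightarrow> 'a \<Rightarrow> bool" and \<alpha> :: "'o::wellorder"
  assumes "countable Y" and "strict_linorder_on Y lt"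
  shows "rank_ge Y lt \<alpha> \<longleftrightarrow> rank_ge Y (rev_order lt) \<alpha>"
  unfolding rank_ge_def by (rule rk_ge_rev)

end
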